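(* Let $\mathrm{SU}(2)\subset\mathrm{SO}(4)\times\{1\}$ act on $\Lambda^2_-S^4$. Every point is mapped into the fiber over some ${}^t(x_1,0,0,0,x_5)$ with $x_1\ge0$. For $p_0$ in that fiber, the orbit $\mathrm{SU}(2)\cdot p_0$ is diffeomorphic to $S^3$ if $x_5\ne\pm1$; to $S^2$ if $x_5=1$ and $p_0\ne0$; and to a point if $x_5=1$ and $p_0=0$, or if $x_5=-1$.
   Context: $S^4\subset\mathbb R^5$ is the unit sphere, $\Lambda^2_-S^4$ the bundle of anti-self-dual 2-forms (round metric); $\mathrm{SO}(5)$ acts on $\Lambda^2_-S^4$ by lifting its linear action on $S^4$ to 2-forms ($g\cdot\omega=(g^{-1})^*\omega$). $\mathrm{SU}(2)$ acts $\mathbb C$-linearly on $\mathbb C^2\cong\mathbb R^4$ via $(z_1,z_2)=(x_1+ix_2,x_3+ix_4)$ and fixes $x_5$; $p_0=0$ means $p_0$ lies in the zero section. *)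

theory Defs
  imports "HOL-Analysis.Analysis"
begin

inductive_set iter_partials ::
  "('a::euclidean_space \<Rightarrow> 'b::real_normed_vector) \<Rightarrow> ('a \<Rightarrow> 'b) set"
  for f where
  base: "f \<in> iter_partials f"
| step: "g \<in> iter_partials f \<Longrightarrow> b \<in> Basis \<Longrightarrow>
          (\<lambda>x. frechet_derivative g (at x) b) \<in> iter_partials f"

definition smooth_on :: "'a::euclidean_space set \<Rightarrow> ('a \<Rightarrow> 'b::real_normed_vector) \<Rightarrow> bool" where
  "smooth_on U f \<longleftrightarrow> open U \<and> (\<forall>g \<in> iter_partials f. g differentiable_on U)"

definition smooth_map_on :: "'a::euclidean_space set \<Rightarrow> ('a \<Rightarrow> 'b::real_normed_vector) \<Rightarrow> bool" where
  "smooth_map_on S f \<longleftrightarrow>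
     (\<forall>x\<in>S. \<exists>U g. open U \<and> x \<in> U \<and> smooth_on U g \<and> (\<forall>y\<in>S \<inter> U. g y = f y))"

definition diffeomorphic :: "'a::euclidean_space set \<Rightarrow> 'b::euclidean_space set \<Rightarrow> bool" where
  "diffeomorphic S T \<longleftrightarrow>
     (\<exists>f g. smooth_map_on S f \<and> smooth_map_on T g \<and> f ` S \<subseteq> T \<and> g ` T \<subseteq> S \<and>
            (\<forall>x\<in>S. g (f x) = x) \<and> (\<forall>y\<in>T. f (g y) = y))"

text \<open>A 2-form at x in S^4 is a skew 5x5 matrix A (omega(u,v) = u^T A v) with A x = 0,
  i.e. a 2-form on the tangent space x-perp.  Components are x$1,...,x$5.\<close>

definition hodge4 :: "real^5 \<Rightarrow> real^5^5 \<Rightarrow> real^5^5" where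
  "hodge4 x A = (\<chi> i j. (1/2) * (\<Sum>k\<in>UNIV. \<Sum>l\<in>UNIV. A$k$l *
      det (vector [axis i 1, axis j 1, axis k 1, axis l 1, x] :: real^5^5)))"

definition ASD_bundle :: "((real^5) \<times> (real^5^5)) set" where
  "ASD_bundle = {(x, A). norm x = 1 \<and> transpose A = - A \<and> A *v x = 0 \<and> hodge4 x A = - A}"

text \<open>Action of SO(5) (and subgroups) on the bundle: g.(x,A) = (g x, g A g^T),
  which is (g^{-1})^* on 2-forms for orthogonal g.\<close>
definition bundle_act :: "real^5^5 \<Rightarrow> (real^5) \<times> (real^5^5) \<Rightarrow> (real^5) \<times> (real^5^5)" where
  "bundle_act g p = (g *v fst p, g ** snd p ** transpose g)"

definition SU2 :: "(complex^2^2) set" where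
  "SU2 = {U. U ** (\<chi> i j. cnj (U $ j $ i)) = mat 1 \<and> det U = 1}"

text \<open>SU(2) acting on C^2 = R^4 via (z1,z2) = (x1 + i x2, x3 + i x4), fixing x5.\<close>
definition su2_apply :: "complex^2^2 \<Rightarrow> real^5 \<Rightarrow> real^5" where
  "su2_apply U x =
    (let w = U *v (vector [Complex (x$1) (x$2), Complex (x$3) (x$4)] :: complex^2)
     in vector [Re (w$1), Im (w$1), Re (w$2), Im (w$2), x$5])"

definition su2_mat :: "complex^2^2 \<Rightarrow> real^5^5" where
  "su2_mat U = matrix (su2_apply U)"

definition su2_orbit :: "(real^5) \<times> (real^5^5) \<Rightarrow> ((real^5) \<times> (real^5^5)) set" where
  "su2_orbit p = (\<lambda>U. bundle_act (su2_mat U) p) ` SU2"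

end

theory Submission
  imports Defs
begin


lemma exhaust_5:
  fixes x :: 5
  shows "x = 1 \<or> x = 2 \<or> x = 3 \<or> x = 4 \<or> x = 5"
proof (induct x)
  case (of_int z)
  then have "z = 0 \<or> z = 1 \<or> z = 2 \<or> z = 3 \<or> z = 4" by fastforce
  then show ?case by auto
qed

lemma forall_5: "(\<forall>i::5. P i) \<longleftrightarrow> P 1 \<and> P 2 \<and> P 3 \<and> P 4 \<and> P 5"
  by (metis exhaust_5)

lemma UNIV_5: "UNIV = {1, 2, 3, 4, 5::5}"
  using exhaust_5 by auto

lemma sum_5: "sum f (UNIV::5 set) = f 1 + f 2 + f 3 + f 4 + f 5"
  unfolding UNIV_5 by (simp add: ac_simps)

lemma vector_4 [simp]:
 "(vector [x1,x2,x3,x4] ::('a::zero)^4)$1 = x1"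
 "(vector [x1,x2,x3,x4] ::('a::zero)^4)$2 = x2"
 "(vector [x1,x2,x3,x4] ::('a::zero)^4)$3 = x3"
 "(vector [x1,x2,x3,x4] ::('a::zero)^4)$4 = x4"
  unfolding vector_def by simp_all

lemma vector_5 [simp]:
 "(vector [x1,x2,x3,x4,x5] ::('a::zero)^5)$1 = x1"
 "(vector [x1,x2,x3,x4,x5] ::('a::zero)^5)$2 = x2"
 "(vector [x1,x2,x3,x4,x5] ::('a::zero)^5)$3 = x3"
 "(vector [x1,x2,x3,x4,x5] ::('a::zero)^5)$4 = x4"
 "(vector [x1,x2,x3,x4,x5] ::('a::zero)^5)$5 = x5"
  unfolding vector_def by simp_all



definition quad :: "('a::euclidean_space \<Rightarrow> 'b::euclidean_space) \<Rightarrow> bool" where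
  "quad f \<longleftrightarrow> (\<exists>c L B. linear L \<and> bilinear B \<and> f = (\<lambda>x. c + L x + B x x))"

lemma quad_hd:
  fixes L :: "'a::euclidean_space \<Rightarrow> 'b::euclidean_space"
  assumes "linear L" "bilinear B"
  shows "((\<lambda>x. c + L x + B x x) has_derivative (\<lambda>h. L h + (B x h + B h x))) (at x)"
proof -
  have bb: "bounded_bilinear B" using assms(2) bilinear_conv_bounded_bilinear by blast
  have bl: "bounded_linear L" using assms(1) linear_conv_bounded_linear by blast
  have "((\<lambda>x. B x x) has_derivative (\<lambda>h. B x h + B h x)) (at x)"
    using bounded_bilinear.FDERIV[OF bb, of "\<lambda>x. x" "\<lambda>h. h" x UNIV "\<lambda>x. x" "\<lambda>h. h"]
    by (simp add: has_derivative_ident)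
  moreover have "(L has_derivative L) (at x)" using bl by (rule bounded_linear_imp_has_derivative)
  ultimately show ?thesis
    using has_derivative_add[OF has_derivative_add[OF has_derivative_const[of c] \<open>(L has_derivative L) (at x)\<close>]] by simp
qed

lemma quad_iter:
  assumes "g \<in> iter_partials f" "quad f" shows "quad g"
  using assms
proof (induction rule: iter_partials.induct)
  case base then show ?case .
next
  case (step g b)
  then obtain c L B where h: "linear L" "bilinear B" "g = (\<lambda>x. c + L x + B x x)"
    unfolding quad_def by blast
  have fd: "frechet_derivative g (at x) = (\<lambda>h. L h + (B x h + B h x))" for x
    using quad_hd[OF h(1,2), of c x] h(3) frechet_derivative_at by metis
  have l1: "linear (\<lambda>x. B x b + B b x)"
    using h(2) unfolding bilinear_def by (intro linear_compose_add) auto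
  have l0: "bilinear (\<lambda>(x::'a) (y::'a). (0::'b))"
    by (simp add: bilinear_def linear_zero)
  show ?case unfolding quad_def fd
    by (rule exI[of _ "L b"], rule exI[of _ "\<lambda>x. B x b + B b x"], rule exI[of _ "\<lambda>x y. 0"])
       (use l1 l0 in auto)
qed

lemma quad_smooth: "quad f \<Longrightarrow> smooth_on UNIV f"
  unfolding smooth_on_def
proof (intro conjI ballI open_UNIV)
  fix g assume "quad f" "g \<in> iter_partials f"
  then have "quad g" using quad_iter by blast
  then obtain c L B where h: "linear L" "bilinear B" "g = (\<lambda>x. c + L x + B x x)"
    unfolding quad_def by blast
  show "g differentiable_on UNIV"
    unfolding differentiable_on_def differentiable_def h(3)
    using quad_hd[OF h(1,2)] has_derivative_at_withinI by blast
qed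

lemma quad_smooth_map: "quad f \<Longrightarrow> smooth_map_on S f"
  unfolding smooth_map_on_def using quad_smooth by blast

lemma quad_linear: "linear L \<Longrightarrow> quad L"
  unfolding quad_def
  by (rule exI[of _ 0], rule exI[of _ L], rule exI[of _ "\<lambda>x y. 0"])
     (auto simp: bilinear_def linear_zero)

lemma quad_const: "quad (\<lambda>x. c)"
  unfolding quad_def
  by (rule exI[of _ c], rule exI[of _ "\<lambda>x. 0"], rule exI[of _ "\<lambda>x y. 0"])
     (auto simp: bilinear_def linear_zero)



definition Umat :: "complex \<Rightarrow> complex \<Rightarrow> complex^2^2" where
  "Umat a b = vector [vector [a, - cnj b], vector [b, cnj a]]"

definition Rm :: "real \<Rightarrow> real \<Rightarrow> real \<Rightarrow> real \<Rightarrow> real^5^5" where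
  "Rm a1 a2 b1 b2 = vector [vector [a1,-a2,-b1,-b2,0], vector [a2,a1,b2,-b1,0],
     vector [b1,-b2,a1,a2,0], vector [b2,b1,-a2,a1,0], vector [0,0,0,0,1]]"

lemma Umat_nth [simp]: "Umat a b $ 1 $ 1 = a" "Umat a b $ 1 $ 2 = - cnj b"
  "Umat a b $ 2 $ 1 = b" "Umat a b $ 2 $ 2 = cnj a"
  by (simp_all add: Umat_def)

lemma SU2_form:
  assumes "U \<in> SU2"
  shows "U = Umat (U$1$1) (U$2$1) \<and> (cmod (U$1$1))^2 + (cmod (U$2$1))^2 = 1"
proof -
  define a b c d where "a = U$1$1" "b = U$2$1" "c = U$1$2" "d = U$2$2"
  have e: "U ** (\<chi> i j. cnj (U $ j $ i)) = mat 1" "det U = 1" using assms by (auto simp: SU2_def)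
  have e11: "a * cnj a + c * cnj c = 1"
    using arg_cong[OF e(1), of "\<lambda>M. M$1$1"] by (simp add: matrix_matrix_mult_def sum_2 a_b_c_d_def mat_def)
  have e12: "a * cnj b + c * cnj d = 0"
    using arg_cong[OF e(1), of "\<lambda>M. M$1$2"] by (simp add: matrix_matrix_mult_def sum_2 a_b_c_d_def mat_def)
  have e22: "b * cnj b + d * cnj d = 1"
    using arg_cong[OF e(1), of "\<lambda>M. M$2$2"] by (simp add: matrix_matrix_mult_def sum_2 a_b_c_d_def mat_def)
  have dt: "a * d - c * b = 1" using e(2) by (simp add: det_2 a_b_c_d_def)
  have e12': "cnj a * b + cnj c * d = 0" using arg_cong[OF e12, of cnj] by (simp add: mult.commute)
  have da: "d = cnj a"
  proof -
    have "cnj a = cnj a * (a * d - c * b)" using dt by simp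
    also have "\<dots> = d * (a * cnj a) - c * (cnj a * b)" by (simp add: algebra_simps)
    also have "\<dots> = d * (a * cnj a) + c * (cnj c * d) - c * (cnj a * b + cnj c * d)" by (simp add: algebra_simps)
    also have "\<dots> = d * (a * cnj a) + c * (cnj c * d)" using e12' by simp
    also have "\<dots> = d * (a * cnj a + c * cnj c)" by (simp add: algebra_simps)
    finally show ?thesis using e11 by simp
  qed
  have cb: "c = - cnj b"
  proof -
    have "- cnj b = - cnj b * (a * d - c * b)" using dt by simp
    also have "\<dots> = - d * (a * cnj b) + c * (b * cnj b)" by (simp add: algebra_simps)
    also have "\<dots> = d * (c * cnj d) + c * (b * cnj b) - d * (a * cnj b + c * cnj d)" by (simp add: algebra_simps)
    also have "\<dots> = d * (c * cnj d) + c * (b * cnj b)" using e12 by simp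
    also have "\<dots> = c * (b * cnj b + d * cnj d)" by (simp add: algebra_simps)
    finally show ?thesis using e22 by simp
  qed
  have "U = Umat a b"
    unfolding vec_eq_iff forall_2 using da cb by (simp add: a_b_c_d_def)
  moreover have "(cmod a)^2 + (cmod b)^2 = 1"
  proof -
    have "complex_of_real ((cmod a)^2 + (cmod b)^2) = a * cnj a + c * cnj c"
      using cb by (simp only: of_real_add complex_norm_square) simp
    then show ?thesis using e11 by (metis of_real_eq_1_iff)
  qed
  ultimately show ?thesis by (simp add: a_b_c_d_def)
qed

lemma Umat_SU2:
  assumes "(cmod a)^2 + (cmod b)^2 = 1" shows "Umat a b \<in> SU2"
proof -
  have "a * cnj a + b * cnj b = complex_of_real ((cmod a)^2 + (cmod b)^2)"
    by (simp only: of_real_add complex_norm_square)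
  then have n: "a * cnj a + b * cnj b = 1" using assms by simp
  show ?thesis unfolding SU2_def
    using n by (simp add: vec_eq_iff forall_2 matrix_matrix_mult_def sum_2 mat_def det_2 algebra_simps)
qed



lemma lin_mr: "linear (\<lambda>X::real^'n^'m. X ** (C::real^'p^'n))"
  by (rule linearI) (simp_all add: vec_eq_iff matrix_matrix_mult_def sum.distrib algebra_simps sum_distrib_left)

lemma lin_ml: "linear (\<lambda>Y::real^'p^'n. (C::real^'n^'m) ** Y)"
  by (rule linearI) (simp_all add: vec_eq_iff matrix_matrix_mult_def sum.distrib algebra_simps sum_distrib_left)

lemma lin_tr: "linear (transpose :: real^'n^'m \<Rightarrow> real^'m^'n)"
  by (rule linearI) (simp_all add: vec_eq_iff transpose_def)

lemma lin_mv: "linear (\<lambda>X::real^'n^'m. X *v (v::real^'n))"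
  by (rule linearI) (simp_all add: vec_eq_iff matrix_vector_mult_def sum.distrib algebra_simps sum_distrib_left)

lemma mat_add_rdistrib: "((A::real^'n^'m) + B) ** (C::real^'p^'n) = A ** C + B ** C"
  by (simp add: vec_eq_iff matrix_matrix_mult_def sum.distrib algebra_simps)

lemma quad_pair:
  assumes "quad f" "quad g" shows "quad (\<lambda>x. (f x, g x))"
proof -
  obtain c1 L1 B1 where 1: "linear L1" "bilinear B1" "f = (\<lambda>x. c1 + L1 x + B1 x x)"
    using assms(1) unfolding quad_def by blast
  obtain c2 L2 B2 where 2: "linear L2" "bilinear B2" "g = (\<lambda>x. c2 + L2 x + B2 x x)"
    using assms(2) unfolding quad_def by blast
  have l: "linear (\<lambda>x. (L1 x, L2 x))"
    using 1(1) 2(1) by (intro linearI) (simp_all add: linear_add linear_scale)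
  have b: "bilinear (\<lambda>x y. (B1 x y, B2 x y))"
    unfolding bilinear_def
    by (auto intro!: linearI simp: bilinear_ladd[OF 1(2)] bilinear_ladd[OF 2(2)] bilinear_radd[OF 1(2)]
      bilinear_radd[OF 2(2)] bilinear_lmul[OF 1(2)] bilinear_lmul[OF 2(2)] bilinear_rmul[OF 1(2)] bilinear_rmul[OF 2(2)])
  show ?thesis unfolding quad_def
    by (rule exI[of _ "(c1,c2)"], rule exI[of _ "\<lambda>x. (L1 x, L2 x)"],
        rule exI[of _ "\<lambda>x y. (B1 x y, B2 x y)"]) (use l b 1 2 in auto)
qed

lemma quad_conj:
  fixes L :: "'a::euclidean_space \<Rightarrow> real^'n^'m"
  assumes "linear L"
  shows "quad (\<lambda>q. (E + L q) ** A ** transpose (E + L q))"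
proof -
  let ?L = "\<lambda>q. L q ** A ** transpose E + E ** A ** transpose (L q)"
  let ?B = "\<lambda>q r. L q ** A ** transpose (L r)"
  have tr: "transpose (X + Y) = transpose X + transpose Y" for X Y :: "real^'n^'m"
    by (simp add: vec_eq_iff transpose_def)
  have la: "linear (\<lambda>q. L q ** A)" using linear_compose[OF assms lin_mr, unfolded o_def] .
  have lq: "linear (\<lambda>q. L q ** A ** C)" for C
    using linear_compose[OF la lin_mr, unfolded o_def] .
  have l: "linear ?L"
    by (intro linear_compose_add lq
        linear_compose[OF linear_compose[OF assms lin_tr] lin_ml, unfolded o_def])
  have lr: "linear (\<lambda>r. L q ** A ** transpose (L r))" for q
    using linear_compose[OF linear_compose[OF assms lin_tr] lin_ml, unfolded o_def, of "L q ** A"] .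
  have b: "bilinear ?B" unfolding bilinear_def using lq lr by (intro conjI allI) (rule lr, rule lq)
  have eq: "(E + L q) ** A ** transpose (E + L q) = E ** A ** transpose E + ?L q + ?B q q" for q
    by (simp add: tr matrix_add_ldistrib mat_add_rdistrib algebra_simps)
  show ?thesis unfolding quad_def
    by (rule exI[of _ "E ** A ** transpose E"], rule exI[of _ ?L], rule exI[of _ ?B])
       (use l b eq in auto)
qed

lemma quad_mv:
  fixes L :: "'a::euclidean_space \<Rightarrow> real^'n^'m"
  assumes "linear L"
  shows "quad (\<lambda>q. (E + L q) *v v)"
proof -
  have "linear (\<lambda>q. L q *v v)" using linear_compose[OF assms lin_mv, unfolded o_def] .
  then show ?thesis unfolding quad_def
    by (rule_tac exI[of _ "E *v v"], rule_tac exI[of _ "\<lambda>q. L q *v v"], rule_tac exI[of _ "\<lambda>x y. 0"])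
      (auto simp: bilinear_def linear_zero matrix_vector_mult_add_rdistrib)
qed



definition Rq :: "real^4 \<Rightarrow> real^5^5" where
  "Rq q = Rm (q$1) (q$2) (q$3) (q$4)"

lemma norm4: "norm (q::real^4) = 1 \<longleftrightarrow> (q$1)^2 + (q$2)^2 + (q$3)^2 + (q$4)^2 = 1"
  by (simp add: norm_eq_1 inner_vec_def sum_4 power2_eq_square)

lemma norm3: "norm (q::real^3) = 1 \<longleftrightarrow> (q$1)^2 + (q$2)^2 + (q$3)^2 = 1"
  by (simp add: norm_eq_1 inner_vec_def sum_3 power2_eq_square)

lemma su2_apply_Umat: "su2_apply (Umat (Complex a1 a2) (Complex b1 b2)) = (\<lambda>x. Rm a1 a2 b1 b2 *v x)"
  by (rule ext) (simp add: su2_apply_def Let_def vec_eq_iff forall_5 matrix_vector_mult_def sum_2 sum_5 Rm_def algebra_simps)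

lemma su2_mat_Umat: "su2_mat (Umat (Complex a1 a2) (Complex b1 b2)) = Rm a1 a2 b1 b2"
  unfolding su2_mat_def su2_apply_Umat by simp

lemma su2_mat_SU2: assumes "U \<in> SU2" shows "\<exists>q. norm q = 1 \<and> su2_mat U = Rq q"
proof -
  from SU2_form[OF assms] have h: "U = Umat (U$1$1) (U$2$1)" "(cmod (U$1$1))^2 + (cmod (U$2$1))^2 = 1"
    by auto
  let ?q = "vector [Re (U$1$1), Im (U$1$1), Re (U$2$1), Im (U$2$1)] :: real^4"
  have "norm ?q = 1" unfolding norm4 using h(2) by (simp add: cmod_power2 add.assoc)
  moreover have "su2_mat U = Rq ?q"
    using su2_mat_Umat[of "Re (U$1$1)" "Im (U$1$1)" "Re (U$2$1)" "Im (U$2$1)"] h(1)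
    by (simp add: Rq_def)
  ultimately show ?thesis by blast
qed

lemma Rq_SU2: assumes "norm q = 1" shows "\<exists>U\<in>SU2. su2_mat U = Rq q"
proof -
  let ?U = "Umat (Complex (q$1) (q$2)) (Complex (q$3) (q$4))"
  have "?U \<in> SU2" using assms unfolding norm4 by (intro Umat_SU2) (simp add: cmod_power2 add.assoc)
  moreover have "su2_mat ?U = Rq q" by (simp add: su2_mat_Umat Rq_def)
  ultimately show ?thesis by blast
qed

lemma orbit_param: "su2_orbit p = (\<lambda>q. bundle_act (Rq q) p) ` sphere (0::real^4) 1"
proof
  show "su2_orbit p \<subseteq> (\<lambda>q. bundle_act (Rq q) p) ` sphere 0 1"
    unfolding su2_orbit_def using su2_mat_SU2 by fastforce
  show "(\<lambda>q. bundle_act (Rq q) p) ` sphere 0 1 \<subseteq> su2_orbit p"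
  proof
    fix y assume "y \<in> (\<lambda>q. bundle_act (Rq q) p) ` sphere 0 1"
    then obtain q where q: "norm q = 1" "y = bundle_act (Rq q) p" by auto
    obtain U where "U \<in> SU2" "su2_mat U = Rq q" using Rq_SU2[OF q(1)] by blast
    then show "y \<in> su2_orbit p" unfolding su2_orbit_def q(2) by (metis image_eqI)
  qed
qed



lemma diffeo_param:
  assumes "quad f" "quad g" "\<forall>q\<in>S. f (g q) = q"
  shows "diffeomorphic (g ` S) S"
  unfolding diffeomorphic_def
  by (rule exI[of _ f], rule exI[of _ g]) (use assms in \<open>auto simp: quad_smooth_map\<close>)

lemma Rq_lin: "linear (\<lambda>q. Rq q - Rq 0)"
  by (rule linearI) (simp_all add: vec_eq_iff forall_5 Rq_def Rm_def)

lemma quad_act: "quad (\<lambda>q. bundle_act (Rq q) (x, A))"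
proof -
  have "quad (\<lambda>q. ((Rq 0 + (Rq q - Rq 0)) *v x, (Rq 0 + (Rq q - Rq 0)) ** A ** transpose (Rq 0 + (Rq q - Rq 0))))"
    by (rule quad_pair[OF quad_mv[OF Rq_lin] quad_conj[OF Rq_lin]])
  then show ?thesis unfolding bundle_act_def fst_conv snd_conv by simp
qed

lemma part1:
  assumes "p \<in> ASD_bundle"
  shows "\<exists>U\<in>SU2. \<exists>x1 x5. x1 \<ge> 0 \<and> fst (bundle_act (su2_mat U) p) = (vector [x1, 0, 0, 0, x5] :: real^5)"
proof -
  obtain x A where p: "p = (x, A)" by (cases p)
  define r where "r = sqrt ((x$1)^2 + (x$2)^2 + (x$3)^2 + (x$4)^2)"
  have r0: "r \<ge> 0" unfolding r_def by simp
  have rsq: "r^2 = (x$1)^2 + (x$2)^2 + (x$3)^2 + (x$4)^2" unfolding r_def by simp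
  show ?thesis
  proof (cases "r = 0")
    case True
    then have s: "(x$1)^2 + (x$2)^2 + (x$3)^2 + (x$4)^2 = 0" using rsq by simp
    have "(x$1)^2 = 0 \<and> (x$2)^2 = 0 \<and> (x$3)^2 = 0 \<and> (x$4)^2 = 0"
      using s zero_le_power2[of "x$1"] zero_le_power2[of "x$2"] zero_le_power2[of "x$3"] zero_le_power2[of "x$4"]
      by linarith
    then have z: "x$1 = 0" "x$2 = 0" "x$3 = 0" "x$4 = 0" by simp_all
    let ?q = "vector [1,0,0,0] :: real^4"
    obtain U where U: "U \<in> SU2" "su2_mat U = Rq ?q" using Rq_SU2[of ?q] by (auto simp: norm4)
    have "fst (bundle_act (su2_mat U) p) = vector [0,0,0,0,x$5]"
      using z by (simp add: U p bundle_act_def vec_eq_iff forall_5 matrix_vector_mult_def sum_5 Rq_def Rm_def)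
    then show ?thesis using U(1) by force
  next
    case False
    then have rp: "r > 0" using r0 by simp
    let ?q = "vector [x$1/r, -x$2/r, -x$3/r, -x$4/r] :: real^4"
    have "(x$1)^2 + (x$2)^2 + (x$3)^2 + (x$4)^2 > 0" using rp rsq by (metis zero_less_power)
    then have "norm ?q = 1" unfolding norm4 using rp rsq by (simp add: power_divide add_divide_distrib[symmetric])
    then obtain U where U: "U \<in> SU2" "su2_mat U = Rq ?q" using Rq_SU2[of ?q] by auto
    have h: "fst (bundle_act (su2_mat U) p) = vector [r,0,0,0,x$5]"
      using rp rsq by (simp add: U p bundle_act_def vec_eq_iff forall_5 matrix_vector_mult_def sum_5 Rq_def Rm_def
         field_simps power2_eq_square)
    show ?thesis by (rule bexI[OF _ U(1)]) (rule exI[of _ r], rule exI[of _ "x$5"], use h rp in simp)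
  qed
qed

lemma generic:
  assumes "x1 > 0"
  shows "diffeomorphic (su2_orbit (vector [x1, 0, 0, 0, x5], A)) (sphere (0::real^4) 1)"
proof -
  let ?f = "\<lambda>p::(real^5)\<times>(real^5^5). (1/x1) *\<^sub>R (vector [fst p $ 1, fst p $ 2, fst p $ 3, fst p $ 4] :: real^4)"
  have lf: "linear ?f" by (rule linearI) (simp_all add: vec_eq_iff forall_4 algebra_simps add_divide_distrib)
  show ?thesis unfolding orbit_param
    by (rule diffeo_param[OF quad_linear[OF lf] quad_act])
       (use assms in \<open>simp add: bundle_act_def vec_eq_iff forall_4 matrix_vector_mult_def sum_5 Rq_def Rm_def\<close>)
qed



abbreviation D5 :: "5 \<Rightarrow> 5 \<Rightarrow> 5 \<Rightarrow> 5 \<Rightarrow> 5 \<Rightarrow> real" where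
  "D5 i j k l m \<equiv> det (vector [axis i 1, axis j 1, axis k 1, axis l 1, axis m 1] :: real^5^5)"

lemma det_swap:
  fixes A :: "real^5^5"
  assumes "a \<noteq> b" shows "det (\<chi> i. A $ Transposition.transpose a b i) = - det A"
  using det_permute_rows[OF permutes_swap_id[of a UNIV b], of A] assms by (simp add: sign_swap_id)

lemma D5_0:
  "i = j \<Longrightarrow> D5 i j k l m = 0" "i = k \<Longrightarrow> D5 i j k l m = 0" "i = l \<Longrightarrow> D5 i j k l m = 0"
  "i = m \<Longrightarrow> D5 i j k l m = 0" "j = k \<Longrightarrow> D5 i j k l m = 0" "j = l \<Longrightarrow> D5 i j k l m = 0"
  "j = m \<Longrightarrow> D5 i j k l m = 0" "k = l \<Longrightarrow> D5 i j k l m = 0" "k = m \<Longrightarrow> D5 i j k l m = 0"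
  "l = m \<Longrightarrow> D5 i j k l m = 0"
  by (rule det_identical_rows[of 1 2] det_identical_rows[of 1 3] det_identical_rows[of 1 4]
      det_identical_rows[of 1 5] det_identical_rows[of 2 3] det_identical_rows[of 2 4]
      det_identical_rows[of 2 5] det_identical_rows[of 3 4] det_identical_rows[of 3 5]
      det_identical_rows[of 4 5]; simp add: row_def vec_eq_iff)+

lemma D5_I: "D5 1 2 3 4 5 = 1"
proof -
  have "(vector [axis 1 1, axis 2 1, axis 3 1, axis 4 1, axis 5 1] :: real^5^5) = mat 1"
    by (simp add: vec_eq_iff forall_5 mat_def axis_def)
  then show ?thesis by simp
qed

lemma D5_sw:
  assumes "a \<noteq> b" "M = (\<chi> i. (vector [axis i1 1, axis i2 1, axis i3 1, axis i4 1, axis i5 1] :: real^5^5) $ Transposition.transpose a b i)"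
  shows "det M = - D5 i1 i2 i3 i4 i5"
  using det_swap[OF assms(1)] assms(2) by simp

lemma D5_vals: "D5 1 2 4 3 5 = -1" "D5 1 3 2 4 5 = -1" "D5 1 3 4 2 5 = 1" "D5 1 4 3 2 5 = -1" "D5 1 4 2 3 5 = 1"
proof -
  have a: "D5 1 2 4 3 5 = - D5 1 2 3 4 5"
    by (rule D5_sw[of 3 4]) (simp_all add: vec_eq_iff forall_5 Transposition.transpose_def)
  have b: "D5 1 3 2 4 5 = - D5 1 2 3 4 5"
    by (rule D5_sw[of 2 3]) (simp_all add: vec_eq_iff forall_5 Transposition.transpose_def)
  have c: "D5 1 3 4 2 5 = - D5 1 3 2 4 5"
    by (rule D5_sw[of 3 4]) (simp_all add: vec_eq_iff forall_5 Transposition.transpose_def)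
  have d: "D5 1 4 3 2 5 = - D5 1 2 3 4 5"
    by (rule D5_sw[of 2 4]) (simp_all add: vec_eq_iff forall_5 Transposition.transpose_def)
  have e: "D5 1 4 2 3 5 = - D5 1 4 3 2 5"
    by (rule D5_sw[of 3 4]) (simp_all add: vec_eq_iff forall_5 Transposition.transpose_def)
  show "D5 1 2 4 3 5 = -1" "D5 1 3 2 4 5 = -1" "D5 1 3 4 2 5 = 1" "D5 1 4 3 2 5 = -1" "D5 1 4 2 3 5 = 1"
    using a b c d e D5_I by simp_all
qed

lemma det5_last: "det (vector [a, b, c, d, s *s e] :: real^5^5) = s * det (vector [a, b, c, d, e] :: real^5^5)"
proof -
  have 1: "(vector [a, b, c, d, s *s e] :: real^5^5) = (\<chi> i. if i = 5 then s *s e else (vector [a, b, c, d, e] :: real^5^5) $ i)"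
    by (simp add: vec_eq_iff forall_5)
  have 2: "(vector [a, b, c, d, e] :: real^5^5) = (\<chi> i. if i = 5 then e else (vector [a, b, c, d, e] :: real^5^5) $ i)"
    by (simp add: vec_eq_iff forall_5)
  show ?thesis by (subst 1, subst (2) 2, rule det_row_mul)
qed

lemma hodge_e5:
  "hodge4 (vector [0,0,0,0,s]) A $ 1 $ 2 = s * (A$3$4 - A$4$3) / 2"
  "hodge4 (vector [0,0,0,0,s]) A $ 1 $ 3 = s * (A$4$2 - A$2$4) / 2"
  "hodge4 (vector [0,0,0,0,s]) A $ 1 $ 4 = s * (A$2$3 - A$3$2) / 2"
proof -
  have x: "(vector [0,0,0,0,s] :: real^5) = s *s axis 5 1"
    by (simp add: vec_eq_iff forall_5 axis_def)
  show "hodge4 (vector [0,0,0,0,s]) A $ 1 $ 2 = s * (A$3$4 - A$4$3) / 2"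
    "hodge4 (vector [0,0,0,0,s]) A $ 1 $ 3 = s * (A$4$2 - A$2$4) / 2"
    "hodge4 (vector [0,0,0,0,s]) A $ 1 $ 4 = s * (A$2$3 - A$3$2) / 2"
    unfolding hodge4_def x det5_last
    by (simp_all add: sum_5 D5_0 D5_I D5_vals algebra_simps)
qed



definition Om :: "real^3 \<Rightarrow> real^5^5" where
  "Om c = vector [vector [0, c$1, c$2, c$3, 0], vector [-c$1, 0, -c$3, c$2, 0],
     vector [-c$2, c$3, 0, -c$1, 0], vector [-c$3, -c$2, c$1, 0, 0], vector [0,0,0,0,0]]"

definition Op :: "real^3 \<Rightarrow> real^5^5" where
  "Op c = vector [vector [0, c$1, c$2, c$3, 0], vector [-c$1, 0, c$3, -c$2, 0],
     vector [-c$2, -c$3, 0, c$1, 0], vector [-c$3, c$2, -c$1, 0, 0], vector [0,0,0,0,0]]"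

definition Hq :: "real^4 \<Rightarrow> real^3 \<Rightarrow> real^3" where
  "Hq q c = (let a1 = q$1; a2 = q$2; b1 = q$3; b2 = q$4 in
    vector [(a1^2+a2^2-b1^2-b2^2) * c$1 + 2*(a1*b2 + a2*b1) * c$2 + 2*(a2*b2 - a1*b1) * c$3,
            2*(a2*b1 - a1*b2) * c$1 + (a1^2-a2^2+b1^2-b2^2) * c$2 + 2*(a1*a2 + b1*b2) * c$3,
            2*(a1*b1 + a2*b2) * c$1 + 2*(b1*b2 - a1*a2) * c$2 + (a1^2-a2^2-b1^2+b2^2) * c$3])"

lemma struct_fiber:
  assumes "(vector [0,0,0,0,s], A) \<in> ASD_bundle" "s = 1 \<or> s = -1"
  shows "A = (if s = 1 then Om else Op) (vector [A$1$2, A$1$3, A$1$4])"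
proof -
  have sk: "transpose A = - A" and av: "A *v vector [0,0,0,0,s] = 0"
    and hd: "hodge4 (vector [0,0,0,0,s]) A = - A"
    using assms(1) by (auto simp: ASD_bundle_def)
  have s0: "s \<noteq> 0" using assms(2) by auto
  have skw: "A$j$i = - A$i$j" for i j
    using arg_cong[OF sk, of "\<lambda>M. M$i$j"] by (simp add: transpose_def)
  have c5: "A$i$5 = 0" for i
    using arg_cong[OF av, of "\<lambda>v. v$i"] s0 by (simp add: matrix_vector_mult_def sum_5)
  have h: "s * (A$3$4 - A$4$3) / 2 = - A$1$2" "s * (A$4$2 - A$2$4) / 2 = - A$1$3"
    "s * (A$2$3 - A$3$2) / 2 = - A$1$4"
    using arg_cong[OF hd, of "\<lambda>M. M$1$2"] arg_cong[OF hd, of "\<lambda>M. M$1$3"]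
      arg_cong[OF hd, of "\<lambda>M. M$1$4"] by (simp_all add: hodge_e5)
  have d: "A$i$i = 0" for i using skw[of i i] by simp
  have r5: "A$5$i = 0" for i using skw[of 5 i] c5[of i] by simp
  have sk2: "A$2$1 = - A$1$2" "A$3$1 = - A$1$3" "A$4$1 = - A$1$4" "A$3$2 = - A$2$3"
    "A$4$2 = - A$2$4" "A$4$3 = - A$3$4" by (rule skw)+
  show ?thesis
  proof (cases "s = 1")
    case True
    then have "A$3$4 = - A$1$2" "A$2$4 = A$1$3" "A$2$3 = - A$1$4" using h sk2 by (simp_all add: True)
    then show ?thesis using True d c5 r5 sk2 by (simp add: Om_def vec_eq_iff forall_5)
  next
    case False
    then have m: "s = -1" using assms(2) by auto
    have "A$3$4 = A$1$2" "A$2$4 = - A$1$3" "A$2$3 = A$1$4" using h sk2 by (simp_all add: m)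
    then show ?thesis using False d c5 r5 sk2 by (simp add: Op_def vec_eq_iff forall_5)
  qed
qed



lemma conj_Om: "Rq q ** Om c ** transpose (Rq q) = Om (Hq q c)"
  apply (simp add: vec_eq_iff forall_5 matrix_matrix_mult_def transpose_def sum_5 Rq_def Rm_def Om_def Hq_def
      Let_def)
  apply (intro conjI; algebra)
  done

lemma conj_Op: "Rq q ** Op c ** transpose (Rq q) = Op (((q$1)^2 + (q$2)^2 + (q$3)^2 + (q$4)^2) *\<^sub>R c)"
  apply (simp add: vec_eq_iff forall_5 matrix_matrix_mult_def transpose_def sum_5 Rq_def Rm_def Op_def)
  apply (intro conjI; algebra)
  done

lemma Rq_e5: "Rq q *v vector [0,0,0,0,s] = vector [0,0,0,0,s]"
  by (simp add: vec_eq_iff forall_5 matrix_vector_mult_def sum_5 Rq_def Rm_def)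



definition qmul :: "real^4 \<Rightarrow> real^4 \<Rightarrow> real^4" where
  "qmul u p = vector [u$1*p$1 - u$2*p$2 - u$3*p$3 - u$4*p$4, u$2*p$1 + u$1*p$2 + u$4*p$3 - u$3*p$4,
     u$3*p$1 - u$4*p$2 + u$1*p$3 + u$2*p$4, u$4*p$1 + u$3*p$2 - u$2*p$3 + u$1*p$4]"

definition qc :: "real^4 \<Rightarrow> real^4" where
  "qc w = vector [w$1, -w$2, -w$3, -w$4]"

lemma Hq_mul: "Hq (qmul u p) c = Hq u (Hq p c)"
  apply (simp add: vec_eq_iff forall_3 Hq_def qmul_def Let_def)
  apply (intro conjI; algebra)
  done


lemma Hq_qc: "Hq (qc w) (Hq w c) = (((w$1)^2 + (w$2)^2 + (w$3)^2 + (w$4)^2)^2) *\<^sub>R c"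
  apply (simp add: vec_eq_iff forall_3 Hq_def qc_def Let_def)
  apply (intro conjI; algebra)
  done

lemma norm_qmul: "norm u = 1 \<Longrightarrow> norm p = 1 \<Longrightarrow> norm (qmul u p) = 1"
proof -
  assume a: "norm u = 1" "norm p = 1"
  have "(qmul u p $ 1)^2 + (qmul u p $ 2)^2 + (qmul u p $ 3)^2 + (qmul u p $ 4)^2
      = ((u$1)^2 + (u$2)^2 + (u$3)^2 + (u$4)^2) * ((p$1)^2 + (p$2)^2 + (p$3)^2 + (p$4)^2)"
    by (simp add: qmul_def) algebra
  then show ?thesis using a unfolding norm4 by simp
qed

lemma norm_qc: "norm w = 1 \<Longrightarrow> norm (qc w) = 1"
  unfolding norm4 by (simp add: qc_def)

lemma norm_Hq: assumes "norm q = 1" "norm c = 1" shows "norm (Hq q c) = 1"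
proof -
  have "(Hq q c $ 1)^2 + (Hq q c $ 2)^2 + (Hq q c $ 3)^2
      = ((q$1)^2 + (q$2)^2 + (q$3)^2 + (q$4)^2)^2 * ((c$1)^2 + (c$2)^2 + (c$3)^2)"
    by (simp add: Hq_def Let_def) algebra
  then show ?thesis using assms unfolding norm4 norm3 by simp
qed


definition sq :: "real^3 \<Rightarrow> real^4" where
  "sq c = (if c$1 = -1 then vector [0,0,1,0] else
     (let a = sqrt ((1 + c$1)/2) in vector [a, 0, c$3/(2*a), -c$2/(2*a)]))"

lemma sq_prop: assumes "norm c = 1" shows "norm (sq c) = 1 \<and> Hq (sq c) (vector [1,0,0]) = c"
proof -
  have n: "(c$1)^2 + (c$2)^2 + (c$3)^2 = 1" using assms norm3 by blast
  show ?thesis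
  proof (cases "c$1 = -1")
    case True
    then have "(c$2)^2 + (c$3)^2 = 0" using n by simp
    then have "c$2 = 0" "c$3 = 0" by (simp_all add: sum_power2_eq_zero_iff)
    then show ?thesis using True unfolding norm4
      by (simp add: sq_def Hq_def Let_def vec_eq_iff forall_3)
  next
    case False
    have "c$1 \<ge> -1"
    proof -
      have "(c$1)^2 \<le> 1" using n zero_le_power2[of "c$2"] zero_le_power2[of "c$3"] by linarith
      then have "\<bar>c$1\<bar> \<le> 1" using abs_square_le_1 by blast
      then show ?thesis by linarith
    qed
    then have gt: "1 + c$1 > 0" using False by simp
    define a where "a = sqrt ((1 + c$1)/2)"
    have a0: "a > 0" using gt unfolding a_def by simp
    have a2: "a^2 = (1 + c$1)/2" using gt unfolding a_def by simp
    have sqc: "sq c = vector [a, 0, c$3/(2*a), -c$2/(2*a)]" using False by (simp add: sq_def a_def Let_def)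
    have e23: "(c$2)^2 + (c$3)^2 = (1 - c$1) * (1 + c$1)" using n by (simp add: algebra_simps power2_eq_square)
    have "norm (sq c) = 1" unfolding norm4 sqc
    proof -
      have "a^2 + (c$3 / (2*a))^2 + (-c$2/(2*a))^2 = a^2 + ((c$2)^2 + (c$3)^2) / (4 * a^2)"
        by (simp add: power_divide power_mult_distrib add_divide_distrib)
      also have "\<dots> = 1" unfolding e23 a2 using gt by (simp add: field_simps)
      finally show "(vector [a, 0, c $ 3 / (2 * a), - c $ 2 / (2 * a)] :: real^4) $ 1 ^ 2 + (vector [a, 0, c $ 3 / (2 * a), - c $ 2 / (2 * a)] :: real^4) $ 2 ^ 2 +
        (vector [a, 0, c $ 3 / (2 * a), - c $ 2 / (2 * a)] :: real^4) $ 3 ^ 2 + (vector [a, 0, c $ 3 / (2 * a), - c $ 2 / (2 * a)] :: real^4) $ 4 ^ 2 = 1"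
        by simp
    qed
    moreover have "Hq (sq c) (vector [1,0,0]) = c"
    proof -
      have "a^2 - (c$3/(2*a))^2 - (-c$2/(2*a))^2 = a^2 - ((c$2)^2 + (c$3)^2) / (4 * a^2)"
        by (simp add: power_divide power_mult_distrib diff_divide_distrib add_divide_distrib)
      also have "\<dots> = c$1" unfolding e23 a2 using gt by (simp add: field_simps)
      finally have 1: "a^2 - (c$3/(2*a))^2 - (-c$2/(2*a))^2 = c$1" .
      show ?thesis unfolding sqc using 1 a0
        by (simp add: Hq_def Let_def vec_eq_iff forall_3)
    qed
    ultimately show ?thesis by blast
  qed
qed

lemma Hq_onto:
  assumes "norm c0 = 1"
  shows "(\<lambda>q. Hq q c0) ` sphere (0::real^4) 1 = sphere 0 1"
proof
  show "(\<lambda>q. Hq q c0) ` sphere 0 1 \<subseteq> sphere 0 1" using norm_Hq assms by auto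
  show "sphere 0 1 \<subseteq> (\<lambda>q. Hq q c0) ` sphere 0 1"
  proof
    fix c :: "real^3" assume "c \<in> sphere 0 1"
    then have c: "norm c = 1" by simp
    define w where "w = sq c0"
    have w: "norm w = 1" "Hq w (vector [1,0,0]) = c0" using sq_prop[OF assms] w_def by auto
    have w1: "(w$1)^2 + (w$2)^2 + (w$3)^2 + (w$4)^2 = 1" using w(1) norm4 by blast
    define q where "q = qmul (sq c) (qc w)"
    have "norm q = 1" unfolding q_def using sq_prop[OF c] norm_qc[OF w(1)] norm_qmul by blast
    moreover have "Hq q c0 = c"
      unfolding q_def Hq_mul w(2)[symmetric] Hq_qc w1 using sq_prop[OF c] by simp
    ultimately show "c \<in> (\<lambda>q. Hq q c0) ` sphere 0 1" by force
  qed
qed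



lemma Om_lin: "linear Om"
  by (rule linearI) (simp_all add: vec_eq_iff forall_5 Om_def)

lemma Hq_scale: "Hq q (a *\<^sub>R c) = a *\<^sub>R Hq q c"
  by (simp add: vec_eq_iff forall_3 Hq_def Let_def algebra_simps)

lemma diffeo_single: "diffeomorphic {p} {0::real}"
proof -
  have "diffeomorphic ((\<lambda>_::real. p) ` {0}) {0::real}"
    by (rule diffeo_param[OF quad_const quad_const]) simp
  then show ?thesis by simp
qed

lemma orbit_single:
  assumes "\<And>q. norm q = 1 \<Longrightarrow> bundle_act (Rq q) p = p"
  shows "su2_orbit p = {p}"
proof -
  have "(vector [1,0,0,0] :: real^4) \<in> sphere 0 1" by (simp add: norm4)
  then show ?thesis unfolding orbit_param using assms by force
qed

lemma s2case:
  assumes "(vector [0,0,0,0,1], A) \<in> ASD_bundle" "A \<noteq> 0"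
  shows "diffeomorphic (su2_orbit (vector [0,0,0,0,1], A)) (sphere (0::real^3) 1)"
proof -
  define v where "v = (vector [A$1$2, A$1$3, A$1$4] :: real^3)"
  have Av: "A = Om v" using struct_fiber[OF assms(1)] by (simp add: v_def)
  have "v \<noteq> 0" using assms(2) Av linear_0[OF Om_lin] by auto
  define r where "r = norm v"
  have r0: "r > 0" using \<open>v \<noteq> 0\<close> r_def by simp
  define c0 where "c0 = (1/r) *\<^sub>R v"
  have c0: "norm c0 = 1" using r0 by (simp add: c0_def r_def)
  have vc: "v = r *\<^sub>R c0" using r0 by (simp add: c0_def)
  define e5 where "e5 = (vector [0,0,0,0,1] :: real^5)"
  define g where "g = (\<lambda>c. (e5, Om (r *\<^sub>R c)))"
  define f where "f = (\<lambda>p::(real^5)\<times>(real^5^5). (1/r) *\<^sub>R (vector [snd p $1$2, snd p $1$3, snd p $1$4] :: real^3))"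
  have lf: "linear f" unfolding f_def
    by (rule linearI) (simp_all add: vec_eq_iff forall_3 algebra_simps add_divide_distrib)
  have lg: "linear (\<lambda>c. Om (r *\<^sub>R c))"
    using linear_compose[OF linear_scale_self[of r] Om_lin] by (simp add: o_def)
  have qg: "quad g" unfolding g_def by (rule quad_pair[OF quad_const quad_linear[OF lg]])
  have fg: "\<forall>c\<in>sphere 0 1. f (g c) = c"
    using r0 by (simp add: f_def g_def Om_def vec_eq_iff forall_3)
  have orb: "su2_orbit (vector [0,0,0,0,1], A) = g ` sphere 0 1"
  proof -
    have "bundle_act (Rq q) (e5, A) = g (Hq q c0)" for q
      unfolding bundle_act_def g_def e5_def Av by (simp add: Rq_e5 conj_Om vc Hq_scale)
    then have "su2_orbit (e5, A) = g ` ((\<lambda>q. Hq q c0) ` sphere 0 1)"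
      unfolding orbit_param image_image by simp
    then show ?thesis unfolding Hq_onto[OF c0] e5_def .
  qed
  show ?thesis unfolding orb by (rule diffeo_param[OF quad_linear[OF lf] qg fg])
qed

lemma sdcase:
  assumes "(vector [0,0,0,0,-1], A) \<in> ASD_bundle"
  shows "diffeomorphic (su2_orbit (vector [0,0,0,0,-1], A)) {0::real}"
proof -
  define v where "v = (vector [A$1$2, A$1$3, A$1$4] :: real^3)"
  have Av: "A = Op v" using struct_fiber[OF assms(1)] by (simp add: v_def)
  have "su2_orbit (vector [0,0,0,0,-1], A) = {(vector [0,0,0,0,-1], A)}"
  proof (rule orbit_single)
    fix q :: "real^4" assume "norm q = 1"
    then have "(q$1)^2 + (q$2)^2 + (q$3)^2 + (q$4)^2 = 1" by (simp add: norm4)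
    then show "bundle_act (Rq q) (vector [0,0,0,0,-1], A) = (vector [0,0,0,0,-1], A)"
      by (simp add: bundle_act_def Rq_e5 Av conj_Op)
  qed
  then show ?thesis using diffeo_single by simp
qed

lemma zcase: "diffeomorphic (su2_orbit (vector [0,0,0,0,1], 0)) {0::real}"
proof -
  have "su2_orbit (vector [0,0,0,0,1], 0) = {(vector [0,0,0,0,1], 0)}"
    by (rule orbit_single) (simp add: bundle_act_def Rq_e5)
  then show ?thesis using diffeo_single by simp
qed

theorem lemma4p6:
  shows "(\<forall>p\<in>ASD_bundle. \<exists>U\<in>SU2. \<exists>x1 x5. x1 \<ge> 0 \<and>
            fst (bundle_act (su2_mat U) p) = (vector [x1, 0, 0, 0, x5] :: real^5)) \<and>
         (\<forall>x1 x5 A. (vector [x1, 0, 0, 0, x5], A) \<in> ASD_bundle \<longrightarrow> x1 \<ge> 0 \<longrightarrow>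
            (x5 \<noteq> 1 \<and> x5 \<noteq> -1 \<longrightarrow>
              diffeomorphic (su2_orbit (vector [x1, 0, 0, 0, x5], A)) (sphere (0::real^4) 1)) \<and>
            (x5 = 1 \<and> A \<noteq> 0 \<longrightarrow>
              diffeomorphic (su2_orbit (vector [x1, 0, 0, 0, x5], A)) (sphere (0::real^3) 1)) \<and>
            ((x5 = 1 \<and> A = 0) \<or> x5 = -1 \<longrightarrow>
              diffeomorphic (su2_orbit (vector [x1, 0, 0, 0, x5], A)) {0::real}))"
proof (intro conjI ballI allI impI)
  fix p assume "p \<in> ASD_bundle" then show "\<exists>U\<in>SU2. \<exists>x1 x5. x1 \<ge> 0 \<and>
            fst (bundle_act (su2_mat U) p) = (vector [x1, 0, 0, 0, x5] :: real^5)" by (rule part1)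
next
  fix x1 x5 :: real and A :: "real^5^5"
  assume mem: "(vector [x1, 0, 0, 0, x5], A) \<in> ASD_bundle" and x1: "x1 \<ge> 0"
  have n: "x1^2 + x5^2 = 1"
    using mem by (simp add: ASD_bundle_def norm_eq_1 inner_vec_def sum_5 power2_eq_square)
  have x1z: "x1 = 0" if "x5 = 1 \<or> x5 = -1" using n that by auto
  {
    assume "x5 \<noteq> 1 \<and> x5 \<noteq> -1"
    then have "x1 \<noteq> 0" using n by (auto simp: power2_eq_1_iff)
    then show "diffeomorphic (su2_orbit (vector [x1, 0, 0, 0, x5], A)) (sphere (0::real^4) 1)"
      using x1 generic by simp
  next
    assume h: "x5 = 1 \<and> A \<noteq> 0"
    then show "diffeomorphic (su2_orbit (vector [x1, 0, 0, 0, x5], A)) (sphere (0::real^3) 1)"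
      using s2case[of A] mem x1z by simp
  next
    assume h: "(x5 = 1 \<and> A = 0) \<or> x5 = -1"
    then show "diffeomorphic (su2_orbit (vector [x1, 0, 0, 0, x5], A)) {0::real}"
      using sdcase[of A] zcase mem x1z by auto
  }
qed

end
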